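(* Let $X=\mathcal A^{\mathbb Z^d}$ ($\mathcal A$ finite, $d\ge1$) and let $\phi\colon X\to\mathbb R$ be continuous with $\sum_{n=1}^\infty n^{d-1}\mathrm{var}_n\phi<\infty$. If there exist shift-invariant probability measures $\mu,\nu$ with $\int\phi\,d\mu\ne\int\phi\,d\nu$, then there exists a cylinder set $C$ such that $\eta(C)=0$ for every $\eta\in\mathrm{MM}(\phi)$.
   Context: Shift $(\sigma^{\boldsymbol n}x)_{\boldsymbol m}=x_{\boldsymbol n+\boldsymbol m}$. $\mathrm{var}_n\phi=\sup\{|\phi(x)-\phi(y)|:x|_{[-n,n]^d}=y|_{[-n,n]^d}\}$. $\mathrm{MM}(\phi)$ is the set of shift-invariant probability measures $\eta$ with $\int\phi\,d\eta=\sup_\nu\int\phi\,d\nu$ (supremum over shift-invariant probability measures). A cylinder set is $\{x:x|_\Lambda=w\}$ for finite $\Lambda\subset\mathbb Z^d$, $w\in\mathcal A^\Lambda$. *)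

theory Defs
  imports "HOL-Analysis.Analysis" "HOL-Probability.Probability"
begin

text \<open>Full shift X = A^(Z^d): configurations are functions int^'d => 'a,
  where 'a is a finite alphabet carrying the discrete topology, and X carries
  the product topology (library instance for function types).
  The dimension d is CARD('d) (>= 1 automatically).\<close>

definition shift :: "int^'d \<Rightarrow> (int^'d \<Rightarrow> 'a) \<Rightarrow> (int^'d \<Rightarrow> 'a)" where
  "shift n x = (\<lambda>m. x (n + m))"

definition box :: "nat \<Rightarrow> (int^'d) set" where
  "box n = {m. \<forall>i. \<bar>m $ i\<bar> \<le> int n}"

definition var :: "nat \<Rightarrow> ((int^'d \<Rightarrow> 'a) \<Rightarrow> real) \<Rightarrow> real" where
  "var n \<phi> = (SUP (x, y) \<in> {(x, y). \<forall>m \<in> box n. x m = y m}. \<bar>\<phi> x - \<phi> y\<bar>)"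

definition inv_measures :: "((int^'d \<Rightarrow> 'a::topological_space) measure) set" where
  "inv_measures = {M. sets M = sets borel \<and> prob_space M \<and>
       (\<forall>n. \<forall>A \<in> sets M. emeasure M (shift n -` A) = emeasure M A)}"

definition MM :: "((int^'d \<Rightarrow> 'a::topological_space) \<Rightarrow> real) \<Rightarrow> (int^'d \<Rightarrow> 'a) measure set" where
  "MM \<phi> = {\<eta> \<in> inv_measures.
       integral\<^sup>L \<eta> \<phi> = (SUP \<nu> \<in> inv_measures. integral\<^sup>L \<nu> \<phi>)}"

definition cylinder :: "(int^'d) set \<Rightarrow> (int^'d \<Rightarrow> 'a) \<Rightarrow> (int^'d \<Rightarrow> 'a) set" where
  "cylinder \<Lambda> w = {x. \<forall>m \<in> \<Lambda>. x m = w m}"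

end

theory Submission
  imports Defs
begin

lemma compact_UNIV_fun:
  "compact (UNIV :: (int^'d::finite \<Rightarrow> 'a::{finite,discrete_topology}) set)"
proof -
  have "compact_space (product_topology (\<lambda>i::int^'d. (euclidean :: 'a topology)) UNIV)"
    unfolding compact_space_product_topology
    by (auto simp: compact_space_def intro!: finite_imp_compact)
  then show ?thesis
    by (simp add: euclidean_product_topology compact_space_def)
qed

definition nr :: "int^'d::finite \<Rightarrow> nat" where
  "nr k = nat (Max (range (\<lambda>i. \<bar>k$i\<bar>)))"

lemma nr_ge: "\<bar>k$i\<bar> \<le> int (nr k)"
proof -
  have "\<bar>k$i\<bar> \<le> Max (range (\<lambda>i. \<bar>k$i\<bar>))" by (rule Max_ge) auto
  then show ?thesis unfolding nr_def by linarith
qed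

lemma nr_attained: "\<exists>i. \<bar>k$i\<bar> = int (nr k)"
proof -
  have "Max (range (\<lambda>i. \<bar>k$i\<bar>)) \<in> range (\<lambda>i. \<bar>k$i\<bar>)" by (rule Max_in) auto
  then obtain i where "Max (range (\<lambda>i. \<bar>k$i\<bar>)) = \<bar>k$i\<bar>" by (metis imageE)
  then show ?thesis unfolding nr_def by (intro exI[of _ i]) auto
qed

lemma nr_le_iff: "nr k \<le> n \<longleftrightarrow> (\<forall>i. \<bar>k$i\<bar> \<le> int n)"
  by (metis nr_attained nr_ge order.trans of_nat_le_iff)

lemma nr_ge_iff: "n \<le> nr k \<longleftrightarrow> (\<exists>i. int n \<le> \<bar>k$i\<bar>)"
  by (metis nr_attained nr_ge order.trans of_nat_le_iff)

lemma box_nr: "box n = {m. nr m \<le> n}"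
  unfolding box_def by (auto simp: nr_le_iff)

lemma nr_add: "nr (a + b) \<le> nr a + nr b"
  unfolding nr_le_iff vector_add_component of_nat_add
  by (metis abs_triangle_ineq add_mono nr_ge order_trans)

lemma nr_minus: "nr (- a) = nr a"
  by (metis abs_minus_cancel antisym nr_ge_iff nr_le_iff order_refl vector_uminus_component)

lemma nr_diff_commute: "nr (a - b) = nr (b - a)"
  by (metis minus_diff_eq nr_minus)

lemma nr_zero[simp]: "nr 0 = 0"
  by (simp add: nr_def)

lemma card_vec_set:
  fixes A :: "'d::finite \<Rightarrow> int set"
  shows "card {m::int^'d. \<forall>i. m$i \<in> A i} = (\<Prod>i\<in>UNIV. card (A i))"
proof -
  have "bij_betw vec_nth {m::int^'d. \<forall>i. m$i \<in> A i} (PiE UNIV A)"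
    unfolding bij_betw_def
  proof
    show "inj_on vec_nth {m::int^'d. \<forall>i. m$i \<in> A i}" by (auto simp: inj_on_def vec_eq_iff)
    show "vec_nth ` {m::int^'d. \<forall>i. m$i \<in> A i} = PiE UNIV A"
    proof
      show "vec_nth ` {m::int^'d. \<forall>i. m$i \<in> A i} \<subseteq> PiE UNIV A" by auto
      show "PiE UNIV A \<subseteq> vec_nth ` {m::int^'d. \<forall>i. m$i \<in> A i}"
      proof
        fix f assume "f \<in> PiE UNIV A"
        then have "f = vec_nth (vec_lambda f)" "vec_lambda f \<in> {m::int^'d. \<forall>i. m$i \<in> A i}"
          by auto
        then show "f \<in> vec_nth ` {m::int^'d. \<forall>i. m$i \<in> A i}" by blast
      qed
    qed
  qed
  then show ?thesis by (simp add: bij_betw_same_card card_PiE)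
qed

abbreviation dim :: "'d::finite itself \<Rightarrow> nat" where "dim _ \<equiv> CARD('d)"

lemma nr_le_iff2: "nr k \<le> n \<longleftrightarrow> (\<forall>i. k$i \<in> {- int n..int n})"
  unfolding nr_le_iff atLeastAtMost_iff abs_le_iff by (meson minus_le_iff)

lemma card_box: "card {m::int^'d::finite. nr m \<le> n} = (2*n+1) ^ CARD('d)"
proof -
  have "{m::int^'d. nr m \<le> n} = {m. \<forall>i. m$i \<in> {- int n..int n}}"
    by (simp add: nr_le_iff2)
  moreover have "card {m::int^'d. \<forall>i. m$i \<in> {- int n..int n}} = (\<Prod>i\<in>(UNIV::'d set). card {- int n..int n})"
    by (rule card_vec_set)
  ultimately show ?thesis by (simp add: nat_add_distrib nat_mult_distrib)
qed

lemma finite_box: "finite {m::int^'d::finite. nr m \<le> n}"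
  by (rule card_ge_0_finite) (simp add: card_box)

lemma card_box_face:
  fixes i :: "'d::finite"
  shows "card {m::int^'d. nr m \<le> n \<and> m$i = c} \<le> (2*n+1) ^ (CARD('d) - 1)"
proof -
  have sub: "{m::int^'d. nr m \<le> n \<and> m$i = c} \<subseteq> {m. \<forall>j. m$j \<in> (if j = i then {c} else {- int n..int n})}"
    by (auto simp: nr_le_iff2)
  have e1: "card {m::int^'d. \<forall>j. m$j \<in> (if j = i then {c} else {- int n..int n})}
      = (\<Prod>j\<in>UNIV. if j = i then 1 else (2*n+1))"
    by (rule trans[OF card_vec_set], rule prod.cong) (auto simp: nat_add_distrib)
  have e2: "(\<Prod>j\<in>UNIV. if j = i then 1 else (2*n+1)) = (2*n+1) ^ (CARD('d) - 1)"
  proof -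
    have "(\<Prod>j\<in>UNIV. if j = i then 1 else (2*n+1)) = (\<Prod>j\<in>UNIV-{i}. (2*n+1::nat))"
      by (subst prod.remove[of _ i]) auto
    also have "\<dots> = (2*n+1) ^ (CARD('d) - 1)" by (simp add: card_Diff_singleton)
    finally show ?thesis .
  qed
  have fin: "finite {m::int^'d. \<forall>j. m$j \<in> (if j = i then {c} else {- int n..int n})}"
  proof -
    have "{m::int^'d. \<forall>j. m$j \<in> (if j = i then {c} else {- int n..int n})} \<subseteq> {m. nr m \<le> n + nat \<bar>c\<bar>}"
    proof
      fix m :: "int^'d" assume "m \<in> {m::int^'d. \<forall>j. m$j \<in> (if j = i then {c} else {- int n..int n})}"
      then have H: "m$j \<in> (if j = i then {c} else {- int n..int n})" for j by blast
      have "\<bar>m$j\<bar> \<le> int (n + nat \<bar>c\<bar>)" for j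
      proof (cases "j = i")
        case True then show ?thesis using H[of j] by simp
      next
        case False then show ?thesis using H[of j] by (simp add: abs_le_iff) (smt (verit) abs_ge_zero)
      qed
      then show "m \<in> {m. nr m \<le> n + nat \<bar>c\<bar>}" by (simp add: nr_le_iff)
    qed
    then show ?thesis using finite_box finite_subset by blast
  qed
  show ?thesis using card_mono[OF fin sub] unfolding e1 e2 .
qed

lemma card_shell: "card {m::int^'d::finite. nr m = n} \<le> 2 * CARD('d) * (2*n+1) ^ (CARD('d) - 1)"
proof -
  have "{m::int^'d. nr m = n} \<subseteq> (\<Union>i. {m. nr m \<le> n \<and> m$i = int n} \<union> {m. nr m \<le> n \<and> m$i = - int n})"
    (is "_ \<subseteq> ?U") using nr_attained by (fastforce simp: abs_if split: if_splits)
  have "card {m::int^'d. nr m = n} \<le> card (\<Union>i. {m::int^'d. nr m \<le> n \<and> m$i = int n} \<union> {m. nr m \<le> n \<and> m$i = - int n})"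
  proof (rule Finite_Set.card_mono)
    show "finite (\<Union>i. {m::int^'d. nr m \<le> n \<and> m$i = int n} \<union> {m. nr m \<le> n \<and> m$i = - int n})"
      by (intro finite_UN_I finite_Un[THEN iffD2] conjI finite_subset[OF _ finite_box[of n]]) auto
  qed fact
  also have "\<dots> \<le> (\<Sum>i\<in>UNIV. card ({m::int^'d. nr m \<le> n \<and> m$i = int n} \<union> {m. nr m \<le> n \<and> m$i = - int n}))"
    by (rule card_UN_le) auto
  also have "\<dots> \<le> (\<Sum>i\<in>(UNIV::'d set). 2 * (2*n+1) ^ (CARD('d) - 1))"
  proof (rule sum_mono)
    fix i :: 'd
    have "card ({m::int^'d. nr m \<le> n \<and> m$i = int n} \<union> {m. nr m \<le> n \<and> m$i = - int n})
      \<le> card {m::int^'d. nr m \<le> n \<and> m$i = int n} + card {m::int^'d. nr m \<le> n \<and> m$i = - int n}"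
      by (rule card_Un_le)
    also have "\<dots> \<le> 2 * (2*n+1) ^ (CARD('d) - 1)" using card_box_face[of n i "int n"] card_box_face[of n i "- int n"] by linarith
    finally show "card ({m::int^'d. nr m \<le> n \<and> m$i = int n} \<union> {m. nr m \<le> n \<and> m$i = - int n}) \<le> 2 * (2*n+1) ^ (CARD('d) - 1)" .
  qed
  also have "\<dots> = 2 * CARD('d) * (2*n+1) ^ (CARD('d) - 1)" by simp
  finally show ?thesis .
qed

locale phis =
  fixes \<phi> :: "(int^'d::finite \<Rightarrow> 'a::{finite,discrete_topology}) \<Rightarrow> real"
  assumes cont: "continuous_on UNIV \<phi>"
    and summ: "summable (\<lambda>n. real n ^ (CARD('d) - 1) * var n \<phi>)"
begin

lemma bounded_phi: "bounded (range \<phi>)"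
  using compact_continuous_image[OF cont compact_UNIV_fun] compact_imp_bounded by blast

definition Bd :: real where "Bd = Sup (range (\<lambda>x. \<bar>\<phi> x\<bar>))"

lemma bdd_abs: "bdd_above (range (\<lambda>x. \<bar>\<phi> x\<bar>))"
proof -
  obtain b where "\<forall>y\<in>range \<phi>. norm y \<le> b" using bounded_phi bounded_iff by blast
  then show ?thesis by (auto intro!: bdd_aboveI[of _ b])
qed

lemma phi_bound: "\<bar>\<phi> x\<bar> \<le> Bd"
  unfolding Bd_def by (rule cSUP_upper[OF _ bdd_abs]) auto

lemma var_ge:
  assumes "\<forall>m. nr m \<le> r \<longrightarrow> X m = Y m"
  shows "\<bar>\<phi> X - \<phi> Y\<bar> \<le> var r \<phi>"
proof -
  have "bdd_above ((\<lambda>(x, y). \<bar>\<phi> x - \<phi> y\<bar>) ` {(x, y). \<forall>m \<in> box r. x m = y m})"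
  proof (rule bdd_aboveI[of _ "2*Bd"])
    fix z assume "z \<in> (\<lambda>(x, y). \<bar>\<phi> x - \<phi> y\<bar>) ` {(x, y). \<forall>m \<in> box r. x m = y m}"
    then obtain a b where "z = \<bar>\<phi> a - \<phi> b\<bar>" by auto
    moreover have "\<bar>\<phi> a\<bar> \<le> Bd" "\<bar>\<phi> b\<bar> \<le> Bd" by (rule phi_bound)+
    ultimately show "z \<le> 2 * Bd" by linarith
  qed
  moreover have "(X, Y) \<in> {(x, y). \<forall>m \<in> box r. x m = y m}" using assms by (auto simp: box_nr)
  ultimately show ?thesis unfolding var_def
    by (metis (no_types, lifting) cSUP_upper case_prod_conv)
qed

lemma var_nonneg: "0 \<le> var r \<phi>"
  using var_ge[of r "undefined" "undefined"] by simp


definition SS :: real where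
  "SS = 2 * CARD('d) * var 0 \<phi> + 2 * CARD('d) * 3 ^ (CARD('d) - 1) * suminf (\<lambda>n. real n ^ (CARD('d) - 1) * var n \<phi>)"

lemma SS_bound:
  fixes F :: "(int^'d) set"
  assumes "finite F"
  shows "(\<Sum>u\<in>F. var (nr u) \<phi>) \<le> SS"
proof -
  define R where "R = Max (insert 0 (nr ` F))"
  have FR: "F \<subseteq> {m. nr m \<le> R}" unfolding R_def using assms by (auto intro: Max_ge)
  have "(\<Sum>u\<in>F. var (nr u) \<phi>) \<le> (\<Sum>u\<in>{m::int^'d. nr m \<le> R}. var (nr u) \<phi>)"
    using FR by (intro sum_mono2 finite_box) (auto simp: var_nonneg)
  also have "\<dots> = (\<Sum>r\<in>{..R}. \<Sum>u\<in>{u\<in>{m::int^'d. nr m \<le> R}. nr u = r}. var (nr u) \<phi>)"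
    by (rule sum.group[symmetric]) (auto simp: finite_box)
  also have "\<dots> = (\<Sum>r\<in>{..R}. real (card {u::int^'d. nr u = r}) * var r \<phi>)"
  proof (rule sum.cong)
    fix r assume "r \<in> {..R}"
    then have "{u\<in>{m::int^'d. nr m \<le> R}. nr u = r} = {u. nr u = r}" by auto
    then show "(\<Sum>u\<in>{u\<in>{m::int^'d. nr m \<le> R}. nr u = r}. var (nr u) \<phi>) = real (card {u::int^'d. nr u = r}) * var r \<phi>"
      by simp
  qed simp
  also have "\<dots> \<le> (\<Sum>r\<in>{..R}. (2 * CARD('d) * 3 ^ (CARD('d) - 1)) * (real r ^ (CARD('d) - 1) * var r \<phi>) + (if r = 0 then 2 * CARD('d) * var 0 \<phi> else 0))"
  proof (rule sum_mono)
    fix r assume "r \<in> {..R}"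
    have c: "real (card {u::int^'d. nr u = r}) \<le> 2 * CARD('d) * (2*r+1) ^ (CARD('d) - 1)"
      using card_shell[of r, where 'd='d] by (metis of_nat_le_iff of_nat_mult of_nat_numeral of_nat_power of_nat_add of_nat_1)
    show "real (card {u::int^'d. nr u = r}) * var r \<phi> \<le> (2 * CARD('d) * 3 ^ (CARD('d) - 1)) * (real r ^ (CARD('d) - 1) * var r \<phi>) + (if r = 0 then 2 * CARD('d) * var 0 \<phi> else 0)"
    proof (cases "r = 0")
      case True
      have "real (card {u::int^'d. nr u = 0}) * var 0 \<phi> \<le> 2 * CARD('d) * var 0 \<phi>"
        using c True var_nonneg[of 0] by (simp add: mult_right_mono)
      moreover have "0 \<le> (2 * CARD('d) * 3 ^ (CARD('d) - 1)) * (real 0 ^ (CARD('d) - 1) * var 0 \<phi>)"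
        by (intro mult_nonneg_nonneg) (auto simp: var_nonneg)
      ultimately show ?thesis unfolding True by (simp only: if_True refl)
    next
      case False
      have "(2 * real r + 1) ^ (CARD('d) - 1) \<le> (3 * real r) ^ (CARD('d) - 1)"
        using False by (intro power_mono) auto
      then have "real (card {u::int^'d. nr u = r}) \<le> 2 * CARD('d) * (3 ^ (CARD('d) - 1) * real r ^ (CARD('d) - 1))"
        using c by (simp add: power_mult_distrib) (smt (verit) mult_left_mono of_nat_0_le_iff)
      then have "real (card {u::int^'d. nr u = r}) * var r \<phi> \<le> 2 * CARD('d) * (3 ^ (CARD('d) - 1) * real r ^ (CARD('d) - 1)) * var r \<phi>"
        by (rule mult_right_mono) (simp add: var_nonneg)
      then show ?thesis using False by (simp add: algebra_simps)
    qed
  qed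
  also have "\<dots> = (2 * CARD('d) * 3 ^ (CARD('d) - 1)) * (\<Sum>r\<in>{..R}. real r ^ (CARD('d) - 1) * var r \<phi>) + 2 * CARD('d) * var 0 \<phi>"
    by (simp add: sum.distrib sum_distrib_left)
  also have "\<dots> \<le> SS"
  proof -
    have "(\<Sum>r\<in>{..R}. real r ^ (CARD('d) - 1) * var r \<phi>) \<le> suminf (\<lambda>n. real n ^ (CARD('d) - 1) * var n \<phi>)"
      by (rule sum_le_suminf[OF summ]) (auto simp: var_nonneg)
    then show ?thesis unfolding SS_def by (simp add: mult_left_mono)
  qed
  finally show ?thesis .
qed

end

lemma nr_eqI: "(\<And>i. \<bar>k$i\<bar> \<le> int m) \<Longrightarrow> \<bar>k$j\<bar> = int m \<Longrightarrow> nr k = m"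
  by (metis antisym nr_ge_iff nr_le_iff order_refl)

context phis begin

lemma sum_map_bound:
  fixes F T :: "(int^'d) set" and b :: "int^'d \<Rightarrow> int^'d"
  assumes "finite F" "finite T" "b ` F \<subseteq> T"
  shows "(\<Sum>k\<in>F. var (nr (k - b k)) \<phi>) \<le> card T * SS"
proof -
  have "(\<Sum>k\<in>F. var (nr (k - b k)) \<phi>) = (\<Sum>t\<in>T. \<Sum>k\<in>{k\<in>F. b k = t}. var (nr (k - b k)) \<phi>)"
    by (rule sum.group[symmetric]) (use assms in auto)
  also have "\<dots> \<le> (\<Sum>t\<in>T. SS)"
  proof (rule sum_mono)
    fix t assume "t \<in> T"
    have "(\<Sum>k\<in>{k\<in>F. b k = t}. var (nr (k - b k)) \<phi>) = (\<Sum>k\<in>{k\<in>F. b k = t}. var (nr (k - t)) \<phi>)"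
      by (rule sum.cong) auto
    also have "\<dots> = (\<Sum>u\<in>(\<lambda>k. k - t) ` {k\<in>F. b k = t}. var (nr u) \<phi>)"
      by (subst sum.reindex) (auto simp: inj_on_def)
    also have "\<dots> \<le> SS" by (rule SS_bound) (use assms in auto)
    finally show "(\<Sum>k\<in>{k\<in>F. b k = t}. var (nr (k - b k)) \<phi>) \<le> SS" .
  qed
  also have "\<dots> = card T * SS" by simp
  finally show ?thesis .
qed

lemma inner_bound:
  fixes s :: "int^'d"
  shows "(\<Sum>k\<in>{k. nr (k - s) \<le> n}. var (n - nr (k - s)) \<phi>) \<le> card {b::int^'d. nr b = n} * SS"
proof -
  define I where "I k = (SOME i. \<bar>(k - s)$i\<bar> = int (nr (k - s)))" for k
  have I: "\<bar>(k - s)$(I k)\<bar> = int (nr (k - s))" for k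
    unfolding I_def by (rule someI_ex) (rule nr_attained)
  define b where "b k = s + (\<chi> j. if j = I k then (if (k - s)$j \<ge> 0 then int n else - int n) else (k - s)$j)" for k
  have nb: "nr (b k - s) = n" if "nr (k - s) \<le> n" for k
  proof (rule nr_eqI[where j="I k"])
    fix i show "\<bar>(b k - s)$i\<bar> \<le> int n"
      using that nr_ge[of "k - s" i] by (auto simp: b_def)
  qed (auto simp: b_def)
  have nkb: "nr (k - b k) = n - nr (k - s)" if "nr (k - s) \<le> n" for k
  proof (rule nr_eqI[where j="I k"])
    fix i show "\<bar>(k - b k)$i\<bar> \<le> int (n - nr (k - s))"
      using that I[of k] by (auto simp: b_def)
  next
    show "\<bar>(k - b k)$(I k)\<bar> = int (n - nr (k - s))"
      using that I[of k] by (auto simp: b_def)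
  qed
  have fin: "finite {k::int^'d. nr (k - s) \<le> n}"
  proof -
    have "{k::int^'d. nr (k - s) \<le> n} = (\<lambda>u. u + s) ` {u. nr u \<le> n}"
      by (auto simp: image_iff) (metis diff_add_cancel)
    then show ?thesis by (metis finite_box finite_imageI)
  qed
  have "(\<Sum>k\<in>{k. nr (k - s) \<le> n}. var (n - nr (k - s)) \<phi>) = (\<Sum>k\<in>{k. nr (k - s) \<le> n}. var (nr (k - b k)) \<phi>)"
    by (rule sum.cong) (auto simp: nkb)
  also have "\<dots> \<le> card ((\<lambda>t. t - s) -` {b::int^'d. nr b = n}) * SS"
  proof (rule sum_map_bound[OF fin])
    have "(\<lambda>t. t - s) -` {b::int^'d. nr b = n} = (\<lambda>u. u + s) ` {b. nr b = n}"
      by (auto simp: image_iff) (metis diff_add_cancel)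
    then show "finite ((\<lambda>t. t - s) -` {b::int^'d. nr b = n})"
      using finite_subset[OF _ finite_box[of n]] by (metis (mono_tags) finite_imageI mem_Collect_eq order_refl subsetI)
    show "b ` {k. nr (k - s) \<le> n} \<subseteq> (\<lambda>t. t - s) -` {b. nr b = n}" using nb by auto
  qed
  also have "card ((\<lambda>t. t - s) -` {b::int^'d. nr b = n}) = card {b::int^'d. nr b = n}"
  proof -
    have "(\<lambda>t. t - s) -` {b::int^'d. nr b = n} = (\<lambda>u. u + s) ` {b. nr b = n}"
      by (auto simp: image_iff) (metis diff_add_cancel)
    then show ?thesis by (simp add: card_image inj_on_def)
  qed
  finally show ?thesis .
qed

lemma outer_bound:
  fixes s :: "int^'d" and F :: "(int^'d) set"
  assumes "finite F" "\<And>k. k \<in> F \<Longrightarrow> n < nr (k - s)"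
  shows "(\<Sum>k\<in>F. var (nr (k - s) - n - 1) \<phi>) \<le> card {b::int^'d. nr b = n + 1} * SS"
proof -
  define C where "C = int n + 1"
  define b where "b k = s + (\<chi> j. max (- C) (min C ((k - s)$j)))" for k
  have nb: "nr (b k - s) = n + 1" if "n < nr (k - s)" for k
  proof -
    obtain j where j: "\<bar>(k - s)$j\<bar> = int (nr (k - s))" using nr_attained by blast
    show ?thesis
    proof (rule nr_eqI[where j=j])
      fix i show "\<bar>(b k - s)$i\<bar> \<le> int (n + 1)"
        by (auto simp: b_def C_def)
      show "\<bar>(b k - s)$j\<bar> = int (n + 1)"
        using that j by (auto simp: b_def C_def)
    qed
  qed
  have nkb: "nr (k - b k) = nr (k - s) - n - 1" if "n < nr (k - s)" for k
  proof -
    obtain j where j: "\<bar>(k - s)$j\<bar> = int (nr (k - s))" using nr_attained by blast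
    show ?thesis
    proof (rule nr_eqI[where j=j])
      fix i show "\<bar>(k - b k)$i\<bar> \<le> int (nr (k - s) - n - 1)"
        using that nr_ge[of "k - s" i] by (auto simp: b_def C_def)
      show "\<bar>(k - b k)$j\<bar> = int (nr (k - s) - n - 1)"
        using that j by (auto simp: b_def C_def)
    qed
  qed
  have "(\<Sum>k\<in>F. var (nr (k - s) - n - 1) \<phi>) = (\<Sum>k\<in>F. var (nr (k - b k)) \<phi>)"
    by (rule sum.cong) (auto simp: nkb assms)
  also have "\<dots> \<le> card ((\<lambda>u. u + s) ` {b::int^'d. nr b = n + 1}) * SS"
  proof (rule sum_map_bound[OF assms(1)])
    show "finite ((\<lambda>u. u + s) ` {b::int^'d. nr b = n + 1})"
      using finite_subset[OF _ finite_box[of "n+1"]] by (metis (mono_tags) finite_imageI mem_Collect_eq order_refl subsetI)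
    show "b ` F \<subseteq> (\<lambda>u. u + s) ` {b::int^'d. nr b = n + 1}"
    proof
      fix x assume "x \<in> b ` F"
      then obtain k where "k \<in> F" "x = b k" by auto
      then show "x \<in> (\<lambda>u. u + s) ` {b::int^'d. nr b = n + 1}"
        using nb[of k] assms(2)[of k] by (auto simp: image_iff intro!: exI[of _ "b k - s"])
    qed
  qed
  also have "card ((\<lambda>u. u + s) ` {b::int^'d. nr b = n + 1}) = card {b::int^'d. nr b = n + 1}"
    by (simp add: card_image inj_on_def)
  finally show ?thesis .
qed

end

lemma shift_shift: "shift n (shift k y) = shift (k + n) y"
  unfolding shift_def by (auto simp: algebra_simps)

lemma shift_meas: "(shift k :: (int^'d::finite \<Rightarrow> 'a::topological_space) \<Rightarrow> _) \<in> measurable borel borel"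
proof (rule borel_measurable_continuous_onI)
  show "continuous_on UNIV (shift k :: (int^'d \<Rightarrow> 'a) \<Rightarrow> _)"
    unfolding shift_def by (intro continuous_on_coordinatewise_then_product continuous_on_product_coordinates)
qed

lemma cyl_open:
  fixes \<Lambda> :: "(int^'d::finite) set" and w :: "int^'d \<Rightarrow> 'a::discrete_topology"
  assumes "finite \<Lambda>"
  shows "open {x. \<forall>m\<in>\<Lambda>. x m = w m}"
proof -
  have "open {f::int^'d \<Rightarrow> 'a. \<forall>i\<in>\<Lambda>. f (id i) \<in> {w i}}"
    by (rule product_topology_basis'[OF assms]) (rule discrete_topology_class.open_discrete)
  then show ?thesis by simp
qed

lemma cyl_borel:
  fixes \<Lambda> :: "(int^'d::finite) set" and w :: "int^'d \<Rightarrow> 'a::discrete_topology"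
  assumes "finite \<Lambda>"
  shows "{x. \<forall>m\<in>\<Lambda>. x m = w m} \<in> sets borel"
  using cyl_open[OF assms] by simp

lemma inv_measuresD:
  assumes "M \<in> inv_measures"
  shows "sets M = sets borel" "prob_space M" "space M = UNIV"
    "\<And>A n. A \<in> sets M \<Longrightarrow> emeasure M (shift n -` A) = emeasure M A"
  using assms unfolding inv_measures_def by (auto dest: sets_eq_imp_space_eq)

lemma inv_integrable:
  assumes "M \<in> inv_measures" "f \<in> borel_measurable borel" "\<And>x. \<bar>f x\<bar> \<le> C"
  shows "integrable M (f :: _ \<Rightarrow> real)"
proof -
  interpret prob_space M using inv_measuresD[OF assms(1)] by simp
  show ?thesis
  proof (rule integrable_const_bound[where B=C])
    show "AE x in M. norm (f x) \<le> C" using assms(3) by simp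
    show "f \<in> borel_measurable M"
      by (subst measurable_cong_sets[OF inv_measuresD(1)[OF assms(1)] refl]) (rule assms(2))
  qed
qed

lemma inv_distr:
  assumes "M \<in> inv_measures"
  shows "distr M M (shift k) = M"
proof (rule measure_eqI)
  show "sets (distr M M (shift k)) = sets M" by simp
  fix A assume "A \<in> sets (distr M M (shift k))"
  then have A: "A \<in> sets M" by simp
  have sm: "shift k \<in> measurable M M"
    using shift_meas measurable_cong_sets[OF inv_measuresD(1)[OF assms] inv_measuresD(1)[OF assms]] by blast
  show "emeasure (distr M M (shift k)) A = emeasure M A"
    using emeasure_distr[OF sm A] inv_measuresD(3,4)[OF assms] A by simp
qed

lemma inv_integral_shift:
  assumes "M \<in> inv_measures" "f \<in> borel_measurable borel"
  shows "integral\<^sup>L M (\<lambda>x. f (shift k x)) = integral\<^sup>L M (f :: _ \<Rightarrow> real)"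
proof -
  have sm: "shift k \<in> measurable M M"
    using shift_meas measurable_cong_sets[OF inv_measuresD(1)[OF assms(1)] inv_measuresD(1)[OF assms(1)]] by blast
  have fm: "f \<in> borel_measurable M"
    by (subst measurable_cong_sets[OF inv_measuresD(1)[OF assms(1)] refl]) (rule assms(2))
  have "integral\<^sup>L M f = integral\<^sup>L (distr M M (shift k)) f" using inv_distr[OF assms(1)] by simp
  also have "\<dots> = integral\<^sup>L M (\<lambda>x. f (shift k x))" by (rule integral_distr[OF sm fm])
  finally show ?thesis by simp
qed

lemma exists_ge_integral:
  assumes "prob_space M" "integrable M f"
  shows "\<exists>x\<in>space M. integral\<^sup>L M f \<le> (f x :: real)"
proof (rule ccontr)
  interpret prob_space M by fact
  assume "\<not> ?thesis"
  then have "AE x in M. f x < integral\<^sup>L M f" by (auto intro!: AE_I2 simp: not_le)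
  then have "integral\<^sup>L M f < integral\<^sup>L M (\<lambda>_. integral\<^sup>L M f)"
    by (intro integral_less_AE_space assms(2)) (auto simp: emeasure_space_1)
  then show False by (simp add: prob_space)
qed

lemma exists_le_integral:
  assumes "prob_space M" "integrable M f"
  shows "\<exists>x\<in>space M. (f x :: real) \<le> integral\<^sup>L M f"
  using exists_ge_integral[OF assms(1) integrable_minus[OF assms(2)]] by auto

definition red :: "nat \<Rightarrow> int^'d::finite \<Rightarrow> int^'d" where
  "red L k = (\<chi> i. (k$i + int L) mod (2 * int L + 1) - int L)"

definition per :: "nat \<Rightarrow> (int^'d::finite \<Rightarrow> 'a) \<Rightarrow> (int^'d \<Rightarrow> 'a)" where
  "per L x = (\<lambda>m. x (red L m))"

lemma red_box: "nr (red L k) \<le> L"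
  unfolding nr_le_iff
proof
  fix i
  have "0 \<le> (k$i + int L) mod (2 * int L + 1)" by (rule pos_mod_sign) simp
  have "(k$i + int L) mod (2 * int L + 1) < 2 * int L + 1" by (rule pos_mod_bound) simp
  then have "(k$i + int L) mod (2 * int L + 1) \<le> 2 * int L" by linarith
  with \<open>0 \<le> (k$i + int L) mod (2 * int L + 1)\<close> show "\<bar>red L k $ i\<bar> \<le> int L"
    unfolding red_def by (simp add: abs_le_iff)
qed

lemma red_id: "nr k \<le> L \<Longrightarrow> red L k = k"
proof -
  assume "nr k \<le> L"
  then have h: "\<bar>k$i\<bar> \<le> int L" for i using nr_le_iff by blast
  have "(k$i + int L) mod (2 * int L + 1) = k$i + int L" for i
    using h[of i] by (intro mod_pos_pos_trivial) linarith+
  then show ?thesis unfolding red_def by (simp add: vec_eq_iff)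
qed

lemma red_add: "red L (red L a + b) = red L (a + b)"
proof -
  have "((a$i + int L) mod (2 * int L + 1) - int L + b$i + int L) mod (2 * int L + 1)
      = (a$i + b$i + int L) mod (2 * int L + 1)" for i
  proof -
    have "((a$i + int L) mod (2 * int L + 1) - int L + b$i + int L) = ((a$i + int L) mod (2 * int L + 1) + b$i)"
      by simp
    also have "((a$i + int L) mod (2 * int L + 1) + b$i) mod (2 * int L + 1) = (a$i + int L + b$i) mod (2 * int L + 1)"
      by (rule mod_add_left_eq)
    finally show ?thesis by (simp add: ac_simps)
  qed
  then show ?thesis unfolding red_def by (simp add: vec_eq_iff)
qed

lemma shift_per: "shift k (per L x) = shift (red L k) (per L x)"
  by (simp add: shift_def per_def red_add)

lemma red_inj:
  assumes "nr k \<le> L" "nr k' \<le> L" "red L (k + n) = red L (k' + n)"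
  shows "k = k'"
proof -
  have "k$i = k'$i" for i
  proof -
    from assms(3) have "(k$i + n$i + int L) mod (2 * int L + 1) = (k'$i + n$i + int L) mod (2 * int L + 1)"
      unfolding red_def by (auto simp: vec_eq_iff dest!: spec[of _ i])
    then have dv: "(2 * int L + 1) dvd (k$i - k'$i)"
      by (metis (no_types, opaque_lifting) add_diff_cancel_right mod_eq_dvd_iff diff_diff_eq2 add.commute add_diff_cancel_left)
    have "\<bar>k$i - k'$i\<bar> \<le> 2 * int L" using nr_ge[of k i] nr_ge[of k' i] assms(1,2) by linarith
    then show ?thesis using dvd_imp_le_int[OF _ dv] by (cases "k$i - k'$i = 0") auto
  qed
  then show ?thesis by (subst vec_eq_iff) blast
qed

definition pmeas :: "nat \<Rightarrow> (int^'d::finite \<Rightarrow> 'a::topological_space) \<Rightarrow> (int^'d \<Rightarrow> 'a) measure" where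
  "pmeas L y = distr (measure_pmf (pmf_of_set {k. nr k \<le> L})) borel (\<lambda>k. shift k y)"

lemma box_ne: "{k::int^'d::finite. nr k \<le> L} \<noteq> {}"
proof -
  have "(0::int^'d) \<in> {k::int^'d. nr k \<le> L}" by simp
  then show ?thesis by blast
qed

lemma pmeas_emeasure:
  fixes y :: "int^'d::finite \<Rightarrow> 'a::topological_space"
  assumes "A \<in> sets borel"
  shows "emeasure (pmeas L y) A = card ({k. nr k \<le> L} \<inter> {k. shift k y \<in> A}) / card {k::int^'d. nr k \<le> L}"
proof -
  have m: "(\<lambda>k. shift k y) \<in> measurable (measure_pmf (pmf_of_set {k::int^'d. nr k \<le> L})) borel"
    by simp
  have "emeasure (pmeas L y) A = emeasure (measure_pmf (pmf_of_set {k::int^'d. nr k \<le> L})) ((\<lambda>k. shift k y) -` A \<inter> UNIV)"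
    unfolding pmeas_def using emeasure_distr[OF m assms] by simp
  also have "\<dots> = card ({k. nr k \<le> L} \<inter> ((\<lambda>k. shift k y) -` A \<inter> UNIV)) / card {k::int^'d. nr k \<le> L}"
    by (rule emeasure_pmf_of_set[OF box_ne finite_box])
  also have "{k. nr k \<le> L} \<inter> ((\<lambda>k. shift k y) -` A \<inter> UNIV) = {k. nr k \<le> L} \<inter> {k. shift k y \<in> A}"
    by blast
  finally show ?thesis .
qed

lemma pmeas_inv:
  fixes x :: "int^'d::finite \<Rightarrow> 'a::topological_space"
  shows "pmeas L (per L x) \<in> inv_measures"
proof -
  define y where "y = per L x"
  define B where "B = {k::int^'d. nr k \<le> L}"
  have "sets (pmeas L y) = sets borel" by (simp add: pmeas_def)
  moreover have "prob_space (pmeas L y)"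
    unfolding pmeas_def by (rule prob_space.prob_space_distr[OF prob_space_measure_pmf]) simp
  moreover have "emeasure (pmeas L y) (shift n -` A) = emeasure (pmeas L y) A" if A: "A \<in> sets borel" for n A
  proof -
    have A': "shift n -` A \<in> sets borel"
      using measurable_sets[OF shift_meas A] by simp
    define g where "g k = red L (k + n)" for k
    have gB: "g ` B \<subseteq> B" by (auto simp: g_def B_def red_box)
    have ginj: "inj_on g B" by (auto simp: inj_on_def g_def B_def intro: red_inj)
    have gsurj: "g ` B = B" by (rule endo_inj_surj[OF _ gB ginj]) (simp add: B_def finite_box)
    have sh: "shift n (shift k y) = shift (g k) y" for k
      unfolding shift_shift g_def y_def by (rule shift_per)
    have "bij_betw g (B \<inter> {k. shift k y \<in> shift n -` A}) (B \<inter> {k. shift k y \<in> A})"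
      unfolding bij_betw_def
    proof
      show "inj_on g (B \<inter> {k. shift k y \<in> shift n -` A})" using ginj by (rule inj_on_subset) auto
      show "g ` (B \<inter> {k. shift k y \<in> shift n -` A}) = B \<inter> {k. shift k y \<in> A}"
      proof
        show "g ` (B \<inter> {k. shift k y \<in> shift n -` A}) \<subseteq> B \<inter> {k. shift k y \<in> A}"
          using gB sh by auto
        show "B \<inter> {k. shift k y \<in> A} \<subseteq> g ` (B \<inter> {k. shift k y \<in> shift n -` A})"
        proof
          fix j assume j: "j \<in> B \<inter> {k. shift k y \<in> A}"
          then obtain k where "k \<in> B" "j = g k" using gsurj by blast
          then show "j \<in> g ` (B \<inter> {k. shift k y \<in> shift n -` A})" using j sh by auto
        qed
      qed
    qed
    then have "card (B \<inter> {k. shift k y \<in> shift n -` A}) = card (B \<inter> {k. shift k y \<in> A})"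
      by (rule bij_betw_same_card)
    then show ?thesis
      unfolding pmeas_emeasure[OF A] pmeas_emeasure[OF A'] B_def by simp
  qed
  ultimately show ?thesis unfolding inv_measures_def y_def by auto
qed

lemma pmeas_integral:
  fixes y :: "int^'d::finite \<Rightarrow> 'a::topological_space"
  fixes f :: "(int^'d \<Rightarrow> 'a) \<Rightarrow> real"
  assumes "f \<in> borel_measurable borel"
  shows "integral\<^sup>L (pmeas L y) f = (\<Sum>k\<in>{k. nr k \<le> L}. f (shift k y)) / card {k::int^'d. nr k \<le> L}"
proof -
  have m: "(\<lambda>k. shift k y) \<in> measurable (measure_pmf (pmf_of_set {k::int^'d. nr k \<le> L})) borel"
    by simp
  have "integral\<^sup>L (pmeas L y) f = integral\<^sup>L (measure_pmf (pmf_of_set {k::int^'d. nr k \<le> L})) (\<lambda>k. f (shift k y))"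
    unfolding pmeas_def by (rule integral_distr[OF m assms])
  also have "\<dots> = (\<Sum>k\<in>{k. nr k \<le> L}. f (shift k y)) / card {k::int^'d. nr k \<le> L}"
    by (rule integral_pmf_of_set[OF box_ne finite_box])
  finally show ?thesis .
qed

context phis begin

lemma phi_meas: "\<phi> \<in> borel_measurable borel"
  by (rule borel_measurable_continuous_onI[OF cont])

lemma phi_lb: "- Bd \<le> \<phi> x" and phi_ub: "\<phi> x \<le> Bd"
  using phi_bound[of x] by linarith+

definition beta :: real where "beta = (SUP \<nu>\<in>inv_measures. integral\<^sup>L \<nu> \<phi>)"

lemma int_bound:
  assumes "M \<in> inv_measures"
  shows "\<bar>integral\<^sup>L M \<phi>\<bar> \<le> Bd"
proof -
  interpret prob_space M using inv_measuresD[OF assms] by simp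
  have int: "integrable M \<phi>" by (rule inv_integrable[OF assms phi_meas phi_bound])
  have "integral\<^sup>L M \<phi> \<le> integral\<^sup>L M (\<lambda>_. Bd)"
    by (rule integral_mono[OF int]) (auto simp: phi_ub)
  moreover have "integral\<^sup>L M (\<lambda>_. - Bd) \<le> integral\<^sup>L M \<phi>"
    by (rule integral_mono[OF _ int]) (auto simp: phi_lb)
  ultimately show ?thesis by (simp add: prob_space)
qed

lemma bdd_int: "bdd_above ((\<lambda>\<nu>. integral\<^sup>L \<nu> \<phi>) ` inv_measures)"
proof (rule bdd_aboveI[of _ Bd])
  fix r assume "r \<in> (\<lambda>\<nu>. integral\<^sup>L \<nu> \<phi>) ` inv_measures"
  then obtain M where "M \<in> inv_measures" "r = integral\<^sup>L M \<phi>" by auto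
  then show "r \<le> Bd" using int_bound[of M] by linarith
qed

lemma le_beta: "M \<in> inv_measures \<Longrightarrow> integral\<^sup>L M \<phi> \<le> beta"
  unfolding beta_def by (rule cSUP_upper[OF _ bdd_int])

lemma periodic_bound:
  "(\<Sum>k\<in>{k. nr k \<le> L}. \<phi> (shift k (per L x))) \<le> beta * card {k::int^'d. nr k \<le> L}"
proof -
  have "(\<Sum>k\<in>{k. nr k \<le> L}. \<phi> (shift k (per L x))) / card {k::int^'d. nr k \<le> L} \<le> beta"
    using le_beta[OF pmeas_inv[of L x]] pmeas_integral[OF phi_meas, of L "per L x"] by simp
  moreover have "0 < real (card {k::int^'d. nr k \<le> L})"
    using card_gt_0_iff finite_box box_ne by (metis of_nat_0_less_iff)
  ultimately show ?thesis by (simp add: divide_le_eq)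
qed

end

context phis begin

definition Ssum :: "(int^'d) set \<Rightarrow> (int^'d \<Rightarrow> 'a) \<Rightarrow> real" where
  "Ssum F x = (\<Sum>k\<in>F. \<phi> (shift k x))"

lemma agree_shift:
  assumes "\<And>m. nr m \<le> r \<Longrightarrow> X (k + m) = Y (k' + m)"
  shows "\<bar>\<phi> (shift k X) - \<phi> (shift k' Y)\<bar> \<le> var r \<phi>"
  by (rule var_ge) (use assms in \<open>auto simp: shift_def\<close>)

lemma SS_nonneg: "0 \<le> SS"
  using SS_bound[of "{}"] by simp

lemma nr_tri: "nr (a + b) \<le> nr a + nr b" by (rule nr_add)

lemma gain:
  fixes z xnu xeta :: "int^'d \<Rightarrow> 'a" and s :: "int^'d"
  assumes occ: "\<And>j. nr j \<le> n \<Longrightarrow> z (s + j) = xnu j"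
    and sL: "nr s + n \<le> L"
  shows "Ssum {k. nr k \<le> L} (\<lambda>m. if nr (m - s) \<le> n then xeta (m - s) else z m)
     \<ge> Ssum {k. nr k \<le> L} z + (Ssum {k. nr k \<le> n} xeta - Ssum {k. nr k \<le> n} xnu)
        - 2 * card {b::int^'d. nr b = n} * SS - card {b::int^'d. nr b = n + 1} * SS"
proof -
  define z' where "z' = (\<lambda>m. if nr (m - s) \<le> n then xeta (m - s) else z m)"
  define A where "A = {k::int^'d. nr (k - s) \<le> n}"
  define BL where "BL = {k::int^'d. nr k \<le> L}"
  define D where "D k = \<phi> (shift k z') - \<phi> (shift k z)" for k
  have AL: "A \<subseteq> BL"
  proof
    fix k assume "k \<in> A"
    have "nr k \<le> nr (k - s) + nr s" using nr_add[of "k - s" s] by simp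
    then show "k \<in> BL" using \<open>k \<in> A\<close> sL by (auto simp: A_def BL_def)
  qed
  have finBL: "finite BL" unfolding BL_def by (rule finite_box)
  have "Ssum BL z' - Ssum BL z = (\<Sum>k\<in>BL. D k)"
    unfolding Ssum_def D_def by (simp add: sum_subtractf)
  also have "\<dots> = (\<Sum>k\<in>A. D k) + (\<Sum>k\<in>BL - A. D k)"
    using sum.subset_diff[OF AL finBL, of D] by simp
  finally have split: "Ssum BL z' - Ssum BL z = (\<Sum>k\<in>A. D k) + (\<Sum>k\<in>BL - A. D k)" .
  have Dk: "D k \<ge> \<phi> (shift (k - s) xeta) - \<phi> (shift (k - s) xnu) - 2 * var (n - nr (k - s)) \<phi>"
    if "k \<in> A" for k
  proof -
    have h: "nr (k - s + m) \<le> n" if "nr m \<le> n - nr (k - s)" for m :: "int^'d"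
      using nr_add[of "k - s" m] that \<open>k \<in> A\<close> by (auto simp: A_def)
    have 1: "\<bar>\<phi> (shift k z') - \<phi> (shift (k - s) xeta)\<bar> \<le> var (n - nr (k - s)) \<phi>"
    proof (rule agree_shift)
      fix m :: "int^'d" assume "nr m \<le> n - nr (k - s)"
      then have hh: "nr (k - s + m) \<le> n" by (rule h)
      have eq: "k + m - s = k - s + m" by (simp add: algebra_simps)
      show "z' (k + m) = xeta (k - s + m)" unfolding z'_def eq using hh by simp
    qed
    have 2: "\<bar>\<phi> (shift k z) - \<phi> (shift (k - s) xnu)\<bar> \<le> var (n - nr (k - s)) \<phi>"
    proof (rule agree_shift)
      fix m :: "int^'d" assume "nr m \<le> n - nr (k - s)"
      then have "nr (k - s + m) \<le> n" by (rule h)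
      moreover have "k + m = s + (k - s + m)" by (simp add: algebra_simps)
      ultimately show "z (k + m) = xnu (k - s + m)" using occ by metis
    qed
    show ?thesis using 1 2 unfolding D_def by linarith
  qed
  have "(\<Sum>k\<in>A. D k) \<ge> (\<Sum>k\<in>A. \<phi> (shift (k - s) xeta) - \<phi> (shift (k - s) xnu) - 2 * var (n - nr (k - s)) \<phi>)"
    by (rule sum_mono) (rule Dk)
  moreover have "(\<Sum>k\<in>A. \<phi> (shift (k - s) xeta) - \<phi> (shift (k - s) xnu) - 2 * var (n - nr (k - s)) \<phi>)
      = Ssum {k. nr k \<le> n} xeta - Ssum {k. nr k \<le> n} xnu - 2 * (\<Sum>k\<in>A. var (n - nr (k - s)) \<phi>)"
  proof -
    have A_img: "A = (\<lambda>j. j + s) ` {k. nr k \<le> n}"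
      unfolding A_def by (auto simp: image_iff) (metis diff_add_cancel)
    have inj: "inj_on (\<lambda>j. j + s) {k::int^'d. nr k \<le> n}" by (auto simp: inj_on_def)
    have "(\<Sum>k\<in>A. \<phi> (shift (k - s) xeta)) = Ssum {k. nr k \<le> n} xeta"
      unfolding A_img Ssum_def by (subst sum.reindex[OF inj]) simp
    moreover have "(\<Sum>k\<in>A. \<phi> (shift (k - s) xnu)) = Ssum {k. nr k \<le> n} xnu"
      unfolding A_img Ssum_def by (subst sum.reindex[OF inj]) simp
    ultimately show ?thesis by (simp add: sum_subtractf sum_distrib_left)
  qed
  moreover have "(\<Sum>k\<in>A. var (n - nr (k - s)) \<phi>) \<le> card {b::int^'d. nr b = n} * SS"
    unfolding A_def by (rule inner_bound)
  ultimately have partA: "(\<Sum>k\<in>A. D k) \<ge> Ssum {k. nr k \<le> n} xeta - Ssum {k. nr k \<le> n} xnu - 2 * card {b::int^'d. nr b = n} * SS"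
    by linarith
  have Dk2: "D k \<ge> - var (nr (k - s) - n - 1) \<phi>" if "k \<in> BL - A" for k
  proof -
    have kA: "n < nr (k - s)" using that by (auto simp: A_def)
    have "\<bar>\<phi> (shift k z') - \<phi> (shift k z)\<bar> \<le> var (nr (k - s) - n - 1) \<phi>"
    proof (rule agree_shift)
      fix m :: "int^'d" assume m: "nr m \<le> nr (k - s) - n - 1"
      have "nr (k - s) \<le> nr (k + m - s) + nr (- m)"
        using nr_add[of "k + m - s" "- m"] by (simp add: algebra_simps)
      then have "n < nr (k + m - s)" using m kA by (simp add: nr_minus)
      then show "z' (k + m) = z (k + m)" by (simp add: z'_def)
    qed
    then show ?thesis unfolding D_def by linarith
  qed
  have "(\<Sum>k\<in>BL - A. D k) \<ge> - (\<Sum>k\<in>BL - A. var (nr (k - s) - n - 1) \<phi>)"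
    using sum_mono[of "BL - A" "\<lambda>k. - var (nr (k - s) - n - 1) \<phi>" D] Dk2 by (simp add: sum_negf)
  moreover have "(\<Sum>k\<in>BL - A. var (nr (k - s) - n - 1) \<phi>) \<le> card {b::int^'d. nr b = n + 1} * SS"
    by (rule outer_bound) (use finBL in \<open>auto simp: A_def\<close>)
  ultimately have partB: "(\<Sum>k\<in>BL - A. D k) \<ge> - (card {b::int^'d. nr b = n + 1} * SS)" by linarith
  show ?thesis using split partA partB unfolding z'_def BL_def by linarith
qed

end

lemma nr_tri_diff: "nr (a - c) \<le> nr (a - b) + nr (b - c)"
  using nr_add[of "a - b" "b - c"] by (simp add: algebra_simps)

lemma card_translate_box: "card {t::int^'d::finite. nr (t - s) \<le> n} = card {k::int^'d. nr k \<le> n}"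
proof -
  have "{t::int^'d. nr (t - s) \<le> n} = (\<lambda>u. u + s) ` {k. nr k \<le> n}"
    by (auto simp: image_iff) (metis diff_add_cancel)
  then show ?thesis by (simp add: card_image inj_on_def)
qed

lemma finite_translate_box: "finite {t::int^'d::finite. nr (t - s) \<le> n}"
proof -
  have "{t::int^'d. nr (t - s) \<le> n} = (\<lambda>u. u + s) ` {k. nr k \<le> n}"
    by (auto simp: image_iff) (metis diff_add_cancel)
  then show ?thesis by (metis finite_box finite_imageI)
qed

lemma greedy:
  fixes Os :: "(int^'d::finite) set"
  assumes "finite Os"
  shows "\<exists>G \<subseteq> Os. card Os \<le> card {k::int^'d. nr k \<le> 2*n} * card G \<and> (\<forall>s\<in>G. \<forall>t\<in>G. s \<noteq> t \<longrightarrow> 2*n < nr (s - t))"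
  using assms
proof (induction "card Os" arbitrary: Os rule: less_induct)
  case less
  show ?case
  proof (cases "Os = {}")
    case True then show ?thesis by auto
  next
    case False
    then obtain s where s: "s \<in> Os" by blast
    define Os' where "Os' = Os - {t. nr (t - s) \<le> 2*n}"
    have sO': "s \<notin> Os'" by (simp add: Os'_def)
    have "Os' \<subseteq> Os" by (auto simp: Os'_def)
    then have "Os' \<subset> Os" using s sO' by blast
    then have cl: "card Os' < card Os" by (rule psubset_card_mono[OF less.prems])
    have "finite Os'" using less.prems by (simp add: Os'_def)
    from less.hyps[OF cl this] obtain G' where G': "G' \<subseteq> Os'" "card Os' \<le> card {k::int^'d. nr k \<le> 2*n} * card G'"
      "\<forall>s\<in>G'. \<forall>t\<in>G'. s \<noteq> t \<longrightarrow> 2*n < nr (s - t)" by blast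
    have eq: "Os = Os' \<union> (Os \<inter> {t. nr (t - s) \<le> 2*n})" by (auto simp: Os'_def)
    have "card Os = card (Os' \<union> (Os \<inter> {t. nr (t - s) \<le> 2*n}))" by (rule arg_cong[OF eq])
    also have "\<dots> \<le> card Os' + card (Os \<inter> {t. nr (t - s) \<le> 2*n})" by (rule card_Un_le)
    also have "card (Os \<inter> {t. nr (t - s) \<le> 2*n}) \<le> card {t::int^'d. nr (t - s) \<le> 2*n}"
      by (rule card_mono[OF finite_translate_box]) auto
    also have "\<dots> = card {k::int^'d. nr k \<le> 2*n}" by (rule card_translate_box)
    finally have cO: "card Os \<le> card Os' + card {k::int^'d. nr k \<le> 2*n}" by simp
    have fG': "finite G'" using G'(1) \<open>finite Os'\<close> finite_subset by blast
    have sG': "s \<notin> G'" using G'(1) sO' by blast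
    show ?thesis
    proof (intro exI[of _ "insert s G'"] conjI)
      show "insert s G' \<subseteq> Os" using G'(1) s by (auto simp: Os'_def)
      show "card Os \<le> card {k::int^'d. nr k \<le> 2*n} * card (insert s G')"
        using cO G'(2) fG' sG' by (simp add: algebra_simps)
      show "\<forall>a\<in>insert s G'. \<forall>b\<in>insert s G'. a \<noteq> b \<longrightarrow> 2*n < nr (a - b)"
        using G'(1,3) by (auto simp: Os'_def nr_diff_commute[of s] not_le)
    qed
  qed
qed

definition rep :: "(int^'d::finite) set \<Rightarrow> nat \<Rightarrow> (int^'d \<Rightarrow> 'a) \<Rightarrow> (int^'d \<Rightarrow> 'a) \<Rightarrow> (int^'d \<Rightarrow> 'a)" where
  "rep G n xe x = (\<lambda>m. if \<exists>s\<in>G. nr (m - s) \<le> n then xe (m - (SOME s. s \<in> G \<and> nr (m - s) \<le> n)) else x m)"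

lemma rep_empty: "rep {} n xe x = x"
  by (simp add: rep_def)

lemma rep_insert:
  assumes far: "\<forall>t\<in>G. 2*n < nr (s - t)"
  shows "rep (insert s G) n xe x = (\<lambda>m. if nr (m - s) \<le> n then xe (m - s) else rep G n xe x m)"
proof
  fix m
  show "rep (insert s G) n xe x m = (if nr (m - s) \<le> n then xe (m - s) else rep G n xe x m)"
  proof (cases "nr (m - s) \<le> n")
    case True
    have "(SOME t. t \<in> insert s G \<and> nr (m - t) \<le> n) = s"
    proof (rule some_equality)
      show "s \<in> insert s G \<and> nr (m - s) \<le> n" using True by simp
      fix t assume t: "t \<in> insert s G \<and> nr (m - t) \<le> n"
      show "t = s"
      proof (rule ccontr)
        assume "t \<noteq> s"
        then have "t \<in> G" using t by auto
        then have "2*n < nr (s - t)" using far by auto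
        moreover have "nr (s - t) \<le> nr (s - m) + nr (m - t)" by (rule nr_tri_diff)
        moreover have "nr (s - m) = nr (m - s)" by (rule nr_diff_commute)
        ultimately show False using True t by linarith
      qed
    qed
    then show ?thesis using True unfolding rep_def by auto
  next
    case False
    have eq: "(\<lambda>t. t \<in> insert s G \<and> nr (m - t) \<le> n) = (\<lambda>t. t \<in> G \<and> nr (m - t) \<le> n)"
      using False by auto
    have "(\<exists>t\<in>insert s G. nr (m - t) \<le> n) = (\<exists>t\<in>G. nr (m - t) \<le> n)" using False by auto
    then show ?thesis using False unfolding rep_def eq by simp
  qed
qed

context phis begin

lemma multi_gain:
  fixes x xnu xeta :: "int^'d \<Rightarrow> 'a"
  assumes "finite G"
    and "\<forall>s\<in>G. \<forall>t\<in>G. s \<noteq> t \<longrightarrow> 2*n < nr (s - t)"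
    and "\<forall>s\<in>G. nr s + n \<le> L \<and> (\<forall>j. nr j \<le> n \<longrightarrow> x (s + j) = xnu j)"
  shows "Ssum {k. nr k \<le> L} (rep G n xeta x) \<ge> Ssum {k. nr k \<le> L} x + card G *
     (Ssum {k. nr k \<le> n} xeta - Ssum {k. nr k \<le> n} xnu
        - 2 * card {b::int^'d. nr b = n} * SS - card {b::int^'d. nr b = n + 1} * SS)"
  using assms
proof (induction G rule: finite_induct)
  case empty
  then show ?case by (simp add: rep_empty)
next
  case (insert s G)
  define gg where "gg = Ssum {k. nr k \<le> n} xeta - Ssum {k. nr k \<le> n} xnu
        - 2 * card {b::int^'d. nr b = n} * SS - card {b::int^'d. nr b = n + 1} * SS"
  have IH: "Ssum {k. nr k \<le> L} (rep G n xeta x) \<ge> Ssum {k. nr k \<le> L} x + card G * gg"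
    unfolding gg_def using insert.prems by (intro insert.IH) auto
  have far: "\<forall>t\<in>G. 2*n < nr (s - t)" using insert.prems(1) insert.hyps(2) by auto
  have sL: "nr s + n \<le> L" and occx: "\<And>j. nr j \<le> n \<Longrightarrow> x (s + j) = xnu j"
    using insert.prems(2) by auto
  have occ: "rep G n xeta x (s + j) = xnu j" if j: "nr j \<le> n" for j
  proof -
    have "\<not> (\<exists>t\<in>G. nr (s + j - t) \<le> n)"
    proof
      assume "\<exists>t\<in>G. nr (s + j - t) \<le> n"
      then obtain t where t: "t \<in> G" "nr (s + j - t) \<le> n" by blast
      have "nr (s - t) \<le> nr (s - (s + j)) + nr (s + j - t)" by (rule nr_tri_diff)
      moreover have "nr (s - (s + j)) = nr j" using nr_minus[of j] by simp
      ultimately show False using far t j by fastforce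
    qed
    then show ?thesis unfolding rep_def using occx[OF j] by auto
  qed
  have "Ssum {k. nr k \<le> L} (\<lambda>m. if nr (m - s) \<le> n then xeta (m - s) else rep G n xeta x m)
     \<ge> Ssum {k. nr k \<le> L} (rep G n xeta x) + gg"
    using gain[where z="rep G n xeta x" and s=s, OF occ sL, of xeta] unfolding gg_def by linarith
  then have "Ssum {k. nr k \<le> L} (rep (insert s G) n xeta x) \<ge> Ssum {k. nr k \<le> L} (rep G n xeta x) + gg"
    by (simp add: rep_insert[OF far])
  with IH have "Ssum {k. nr k \<le> L} (rep (insert s G) n xeta x) \<ge> Ssum {k. nr k \<le> L} x + (card G + 1) * gg"
    by (simp add: algebra_simps)
  then show ?case using insert.hyps unfolding gg_def by simp
qed

lemma periodize:
  fixes x :: "int^'d \<Rightarrow> 'a"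
  shows "Ssum {k. nr k \<le> L} (per L x) \<ge> Ssum {k. nr k \<le> L} x - card {b::int^'d. nr b = L} * SS"
proof -
  have pt: "\<phi> (shift k x) - \<phi> (shift k (per L x)) \<le> var (L - nr k) \<phi>" if "nr k \<le> L" for k
  proof -
    have "\<bar>\<phi> (shift k (per L x)) - \<phi> (shift k x)\<bar> \<le> var (L - nr k) \<phi>"
    proof (rule agree_shift)
      fix m :: "int^'d" assume "nr m \<le> L - nr k"
      then have "nr (k + m) \<le> L" using nr_add[of k m] that by simp
      then show "per L x (k + m) = x (k + m)" by (simp add: per_def red_id)
    qed
    then show ?thesis by linarith
  qed
  have ib: "(\<Sum>k\<in>{k::int^'d. nr k \<le> L}. var (L - nr k) \<phi>) \<le> card {b::int^'d. nr b = L} * SS"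
    using inner_bound[where s=0 and n=L] by simp
  have "(\<Sum>k\<in>{k. nr k \<le> L}. \<phi> (shift k x) - \<phi> (shift k (per L x))) \<le> (\<Sum>k\<in>{k::int^'d. nr k \<le> L}. var (L - nr k) \<phi>)"
    by (rule sum_mono) (simp add: pt)
  then show ?thesis using ib unfolding Ssum_def by (simp add: sum_subtractf)
qed

end

lemma arith_n:
  fixes \<delta> S :: real and d :: nat
  assumes "\<delta> > 0" "S \<ge> 0" "d \<ge> 1"
  shows "\<exists>n::nat. 2 * (2 * d * (2 * real n + 1) ^ (d - 1)) * S + (2 * d * (2 * real n + 3) ^ (d - 1)) * S
     < \<delta> * (2 * real n + 1) ^ d"
proof -
  define K where "K = (4 * d + 2 * d * 3 ^ (d - 1)) * S"
  obtain n :: nat where n: "K / \<delta> < real n" using reals_Archimedean2 by blast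
  have Kd0: "K < \<delta> * real n"
    using n assms(1) by (simp add: divide_less_eq algebra_simps)
  have "\<delta> * real n \<le> \<delta> * (2 * real n + 1)" using assms(1) by (intro mult_left_mono) auto
  then have Kd: "K < \<delta> * (2 * real n + 1)" using Kd0 by linarith
  have p: "(2 * real n + 3) ^ (d - 1) \<le> 3 ^ (d - 1) * (2 * real n + 1) ^ (d - 1)"
  proof -
    have "(2 * real n + 3) ^ (d - 1) \<le> (3 * (2 * real n + 1)) ^ (d - 1)"
      by (intro power_mono) auto
    then show ?thesis by (simp only: power_mult_distrib)
  qed
  have pos: "0 < (2 * real n + 1) ^ (d - 1)" by simp
  have "2 * (2 * d * (2 * real n + 1) ^ (d - 1)) * S + (2 * d * (2 * real n + 3) ^ (d - 1)) * S
      \<le> 2 * (2 * d * (2 * real n + 1) ^ (d - 1)) * S + (2 * d * (3 ^ (d - 1) * (2 * real n + 1) ^ (d - 1))) * S"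
    using p assms(2) by (intro add_left_mono mult_right_mono mult_left_mono) auto
  also have "\<dots> = (2 * real n + 1) ^ (d - 1) * K" by (simp add: K_def algebra_simps)
  also have "\<dots> < (2 * real n + 1) ^ (d - 1) * (\<delta> * (2 * real n + 1))"
    using Kd pos by (rule mult_strict_left_mono)
  also have "\<dots> = \<delta> * (2 * real n + 1) ^ d"
    using assms(3) by (simp add: power_eq_if[of _ d] algebra_simps split: if_splits)
  finally show ?thesis by blast
qed

lemma arith_final:
  fixes \<kappa> c S :: real and d n m :: nat
  assumes "\<kappa> * c * (2 * real m + 1) ^ d \<le> S * (2 * d * (2 * real (m + n) + 1) ^ (d - 1))"
    and "n \<le> m" "d \<ge> 1" "S \<ge> 0"
  shows "\<kappa> * c * (2 * real m + 1) \<le> S * d * 2 ^ d"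
proof -
  have "(2 * real (m + n) + 1) ^ (d - 1) \<le> (2 * (2 * real m + 1)) ^ (d - 1)"
    using assms(2) by (intro power_mono) auto
  then have "S * (2 * d * (2 * real (m + n) + 1) ^ (d - 1)) \<le> S * (2 * d * (2 * (2 * real m + 1)) ^ (d - 1))"
    using assms(4) by (intro mult_left_mono) auto
  also have "\<dots> = (S * d * (2 * 2 ^ (d - 1))) * (2 * real m + 1) ^ (d - 1)"
  proof -
    have pm: "(2 * (2 * real m + 1)) ^ (d - 1) = 2 ^ (d - 1) * (2 * real m + 1) ^ (d - 1)"
      by (rule power_mult_distrib)
    show ?thesis unfolding pm by (simp add: algebra_simps)
  qed
  also have "(2::real) * 2 ^ (d - 1) = 2 ^ d" using assms(3) by (cases d) auto
  finally have "\<kappa> * c * (2 * real m + 1) ^ d \<le> (S * d * 2 ^ d) * (2 * real m + 1) ^ (d - 1)"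
    using assms(1) by linarith
  moreover have "(2 * real m + 1) ^ d = (\<kappa> * 0 + (2 * real m + 1)) * (2 * real m + 1) ^ (d - 1)"
    using assms(3) by (simp add: power_eq_if[of _ d] split: if_splits)
  ultimately have "(\<kappa> * c * (2 * real m + 1)) * (2 * real m + 1) ^ (d - 1) \<le> (S * d * 2 ^ d) * (2 * real m + 1) ^ (d - 1)"
    by (simp add: algebra_simps)
  moreover have "0 < (2 * real m + 1) ^ (d - 1)" by simp
  ultimately show ?thesis by (simp add: mult_le_cancel_right)
qed

context phis begin

lemma phi_shift_meas: "(\<lambda>x. \<phi> (shift k x)) \<in> borel_measurable borel"
  using measurable_compose[OF shift_meas phi_meas] by (simp add: comp_def)

lemma phi_shift_int: "M \<in> inv_measures \<Longrightarrow> integrable M (\<lambda>x. \<phi> (shift k x))"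
  by (rule inv_integrable[OF _ phi_shift_meas phi_bound])

lemma Ssum_eq: "Ssum F = (\<lambda>x. \<Sum>k\<in>F. \<phi> (shift k x))"
  by (rule ext) (simp add: Ssum_def)

lemma Ssum_int: assumes "M \<in> inv_measures" shows "integrable M (Ssum F)"
  unfolding Ssum_eq by (rule Bochner_Integration.integrable_sum) (rule phi_shift_int[OF assms])

lemma Ssum_integral:
  assumes "M \<in> inv_measures"
  shows "integral\<^sup>L M (Ssum F) = card F * integral\<^sup>L M \<phi>"
proof (cases "finite F")
  case True
  have "integral\<^sup>L M (Ssum F) = (\<Sum>k\<in>F. integral\<^sup>L M (\<lambda>x. \<phi> (shift k x)))"
    unfolding Ssum_eq using Bochner_Integration.integral_sum[where I=F and M=M and f="\<lambda>k x. \<phi> (shift k x)", OF phi_shift_int[OF assms]] by simp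
  also have "\<dots> = (\<Sum>k\<in>F. integral\<^sup>L M \<phi>)"
    by (rule sum.cong) (auto simp: inv_integral_shift[OF assms phi_meas])
  finally show ?thesis by simp
next
  case False
  then show ?thesis unfolding Ssum_eq by simp
qed

lemma card_pos: "CARD('d) \<ge> 1"
  by (simp add: Suc_le_eq)

lemma real_card_box: "real (card {k::int^'d. nr k \<le> n}) = (2 * real n + 1) ^ CARD('d)"
  unfolding card_box by (simp add: add.commute)

lemma real_card_shell: "real (card {k::int^'d. nr k = n}) \<le> 2 * CARD('d) * (2 * real n + 1) ^ (CARD('d) - 1)"
proof -
  have "real (card {k::int^'d. nr k = n}) \<le> real (2 * CARD('d) * (2*n+1) ^ (CARD('d) - 1))"
    using card_shell[of n, where 'd='d] by (simp only: of_nat_le_iff)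
  then show ?thesis by (simp add: add.commute)
qed

lemma main:
  assumes nonconst: "\<exists>\<mu> \<in> inv_measures. \<exists>\<nu> \<in> inv_measures. integral\<^sup>L \<mu> \<phi> \<noteq> integral\<^sup>L \<nu> \<phi>"
  shows "\<exists>\<Lambda> w. finite \<Lambda> \<and> (\<forall>\<eta> \<in> MM \<phi>. emeasure \<eta> (cylinder \<Lambda> w) = 0)"
proof -
  obtain \<nu> where \<nu>: "\<nu> \<in> inv_measures" "integral\<^sup>L \<nu> \<phi> < beta"
  proof -
    from nonconst obtain \<mu> \<nu>' where mn: "\<mu> \<in> inv_measures" "\<nu>' \<in> inv_measures" "integral\<^sup>L \<mu> \<phi> \<noteq> integral\<^sup>L \<nu>' \<phi>"
      by blast
    have "integral\<^sup>L \<mu> \<phi> \<le> beta" "integral\<^sup>L \<nu>' \<phi> \<le> beta" using mn le_beta by auto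
    then show ?thesis using that mn by (cases "integral\<^sup>L \<mu> \<phi> < beta") auto
  qed
  define \<alpha> where "\<alpha> = integral\<^sup>L \<nu> \<phi>"
  define \<delta> where "\<delta> = beta - \<alpha>"
  have dpos: "\<delta> > 0" using \<nu> by (simp add: \<delta>_def \<alpha>_def)
  obtain n :: nat where hn: "2 * (2 * CARD('d) * (2 * real n + 1) ^ (CARD('d) - 1)) * SS
      + (2 * CARD('d) * (2 * real n + 3) ^ (CARD('d) - 1)) * SS < \<delta> * (2 * real n + 1) ^ CARD('d)"
    using arith_n[OF dpos SS_nonneg card_pos] by blast
  define g where "g = \<delta> * card {k::int^'d. nr k \<le> n} - 2 * card {b::int^'d. nr b = n} * SS
      - card {b::int^'d. nr b = n + 1} * SS"
  have gpos: "g > 0"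
  proof -
    have s1: "real (card {b::int^'d. nr b = n}) * SS \<le> (2 * CARD('d) * (2 * real n + 1) ^ (CARD('d) - 1)) * SS"
      by (rule mult_right_mono[OF real_card_shell SS_nonneg])
    have s2: "real (card {b::int^'d. nr b = n + 1}) * SS \<le> (2 * CARD('d) * (2 * real n + 3) ^ (CARD('d) - 1)) * SS"
      using mult_right_mono[OF real_card_shell[of "n+1"] SS_nonneg] by (simp add: algebra_simps)
    show ?thesis unfolding g_def real_card_box using hn s1 s2 by linarith
  qed
  have \<nu>p: "prob_space \<nu>" using inv_measuresD[OF \<nu>(1)] by simp
  obtain xnu where xnu: "Ssum {k. nr k \<le> n} xnu \<le> card {k::int^'d. nr k \<le> n} * \<alpha>"
    using exists_le_integral[OF \<nu>p Ssum_int[OF \<nu>(1)], of "{k. nr k \<le> n}"]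
    unfolding Ssum_integral[OF \<nu>(1)] \<alpha>_def by auto
  show ?thesis
  proof (intro exI conjI ballI)
    show "finite {k::int^'d. nr k \<le> n}" by (rule finite_box)
    fix \<eta> assume \<eta>MM: "\<eta> \<in> MM \<phi>"
    show "emeasure \<eta> (cylinder {k. nr k \<le> n} xnu) = 0"
    proof (rule ccontr)
      assume ne: "emeasure \<eta> (cylinder {k. nr k \<le> n} xnu) \<noteq> 0"
      have \<eta>inv: "\<eta> \<in> inv_measures" and \<eta>\<beta>: "integral\<^sup>L \<eta> \<phi> = beta"
        using \<eta>MM unfolding MM_def beta_def by auto
      interpret prob_space \<eta> using inv_measuresD[OF \<eta>inv] by simp
      have spc: "space \<eta> = UNIV" using inv_measuresD[OF \<eta>inv] by simp
      define cyl where "cyl = cylinder {k::int^'d. nr k \<le> n} xnu"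
      have cylB: "cyl \<in> sets borel" unfolding cyl_def cylinder_def by (rule cyl_borel[OF finite_box])
      define c where "c = measure \<eta> cyl"
      have cpos: "c > 0"
      proof -
        have "emeasure \<eta> cyl = ennreal c" unfolding c_def by (rule emeasure_eq_measure)
        then have "c \<noteq> 0" using ne unfolding cyl_def by auto
        then show ?thesis unfolding c_def using measure_nonneg[of \<eta> cyl] by linarith
      qed
      obtain xeta where xeta: "card {k::int^'d. nr k \<le> n} * beta \<le> Ssum {k. nr k \<le> n} xeta"
        using exists_ge_integral[OF prob_space_axioms Ssum_int[OF \<eta>inv], of "{k. nr k \<le> n}"]
        unfolding Ssum_integral[OF \<eta>inv] \<eta>\<beta> by auto
      define gg where "gg = Ssum {k. nr k \<le> n} xeta - Ssum {k. nr k \<le> n} xnu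
        - 2 * card {b::int^'d. nr b = n} * SS - card {b::int^'d. nr b = n + 1} * SS"
      have ggpos: "gg > 0"
      proof -
        have "g \<le> gg" unfolding g_def gg_def \<delta>_def using xnu xeta by (simp add: algebra_simps)
        then show ?thesis using gpos by linarith
      qed
      define K where "K = card {k::int^'d. nr k \<le> 2 * n}"
      have Kpos: "real K > 0" unfolding K_def real_card_box by simp
      define \<kappa> where "\<kappa> = gg / K"
      have \<kappa>pos: "\<kappa> > 0" unfolding \<kappa>_def using ggpos Kpos by simp
      obtain m0 :: nat where m0: "SS * CARD('d) * 2 ^ CARD('d) / (\<kappa> * c) < real m0"
        using reals_Archimedean2 by blast
      define m where "m = m0 + n"
      have mn: "n \<le> m" by (simp add: m_def)
      have mbig: "SS * CARD('d) * 2 ^ CARD('d) < \<kappa> * c * (2 * real m + 1)"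
      proof -
        have "SS * CARD('d) * 2 ^ CARD('d) < \<kappa> * c * real m0"
          using m0 \<kappa>pos cpos by (simp add: divide_less_eq algebra_simps)
        also have "\<dots> \<le> \<kappa> * c * (2 * real m + 1)"
          using \<kappa>pos cpos by (intro mult_left_mono) (auto simp: m_def)
        finally show ?thesis .
      qed
      define L where "L = m + n"
      define Q where "Q = {s::int^'d. nr s \<le> m}"
      define cylS where "cylS s = shift s -` cyl" for s
      have cylSB: "cylS s \<in> sets borel" for s
        unfolding cylS_def using measurable_sets[OF shift_meas cylB] by simp
      have cylSm: "measure \<eta> (cylS s) = c" for s
      proof -
        have "emeasure \<eta> (cylS s) = emeasure \<eta> cyl"
          unfolding cylS_def by (rule inv_measuresD(4)[OF \<eta>inv]) (simp add: cylB inv_measuresD(1)[OF \<eta>inv])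
        then show ?thesis unfolding c_def measure_def by simp
      qed
      have cylS_iff: "x \<in> cylS s \<longleftrightarrow> (\<forall>j. nr j \<le> n \<longrightarrow> x (s + j) = xnu j)" for x s
        unfolding cylS_def cyl_def cylinder_def shift_def by auto
      define f where "f x = Ssum {k. nr k \<le> L} x + \<kappa> * (\<Sum>s\<in>Q. indicator (cylS s) x)" for x
      have ind_int: "integrable \<eta> (indicator (cylS s) :: _ \<Rightarrow> real)" for s
        by (rule inv_integrable[OF \<eta>inv borel_measurable_indicator[OF cylSB], where C=1]) (simp add: indicator_def)
      have i1: "integrable \<eta> (\<lambda>x. \<Sum>s\<in>Q. indicator (cylS s) x :: real)"
        by (rule Bochner_Integration.integrable_sum) (rule ind_int)
      then have i2: "integrable \<eta> (\<lambda>x. \<kappa> * (\<Sum>s\<in>Q. indicator (cylS s) x :: real))"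
        by (rule Bochner_Integration.integrable_mult_right)
      have fint: "integrable \<eta> f"
        unfolding f_def by (rule Bochner_Integration.integrable_add[OF Ssum_int[OF \<eta>inv] i2])
      have finQ: "finite Q" unfolding Q_def by (rule finite_box)
      have "integral\<^sup>L \<eta> f = integral\<^sup>L \<eta> (Ssum {k. nr k \<le> L}) + \<kappa> * (\<Sum>s\<in>Q. integral\<^sup>L \<eta> (indicator (cylS s)))"
        unfolding f_def
        by (simp add: Bochner_Integration.integral_add[OF Ssum_int[OF \<eta>inv] i2] Bochner_Integration.integral_sum[OF ind_int])
      also have "\<dots> = card {k::int^'d. nr k \<le> L} * beta + \<kappa> * (card Q * c)"
        unfolding Ssum_integral[OF \<eta>inv] \<eta>\<beta> using cylSm cylSB by (simp add: spc)
      finally have fI: "integral\<^sup>L \<eta> f = card {k::int^'d. nr k \<le> L} * beta + \<kappa> * (card Q * c)" .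
      obtain xs where xs: "integral\<^sup>L \<eta> f \<le> f xs"
        using exists_ge_integral[OF prob_space_axioms fint] by auto
      define Os where "Os = {s\<in>Q. xs \<in> cylS s}"
      have finOs: "finite Os" unfolding Os_def using finQ by simp
      have sumind: "(\<Sum>s\<in>Q. indicator (cylS s) xs) = real (card Os)"
      proof -
        have "(\<Sum>s\<in>Q. indicator (cylS s) xs :: real) = (\<Sum>s\<in>Q. indicator {s. xs \<in> cylS s} s)"
          by (rule sum.cong) (auto simp: indicator_def)
        also have "\<dots> = real (card (Q \<inter> {s. xs \<in> cylS s}))" using finQ by (simp add: indicator_def)
        finally show ?thesis unfolding Os_def by (simp add: Int_def)
      qed
      obtain G where G: "G \<subseteq> Os" "card Os \<le> K * card G" "\<forall>s\<in>G. \<forall>t\<in>G. s \<noteq> t \<longrightarrow> 2*n < nr (s - t)"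
        using greedy[OF finOs, of n] unfolding K_def by blast
      have finG: "finite G" using G(1) finOs finite_subset by blast
      have Gocc: "\<forall>s\<in>G. nr s + n \<le> L \<and> (\<forall>j. nr j \<le> n \<longrightarrow> xs (s + j) = xnu j)"
        using G(1) unfolding Os_def Q_def L_def by (auto simp: cylS_iff)
      define x' where "x' = rep G n xeta xs"
      have mg: "Ssum {k. nr k \<le> L} x' \<ge> Ssum {k. nr k \<le> L} xs + card G * gg"
        unfolding x'_def gg_def by (rule multi_gain[OF finG G(3) Gocc])
      have cg: "\<kappa> * card Os \<le> card G * gg"
      proof -
        have "real (card Os) \<le> real K * card G" using G(2) by (metis of_nat_le_iff of_nat_mult)
        then have "gg * card Os \<le> gg * (real K * card G)" using ggpos by (intro mult_left_mono) auto
        then show ?thesis unfolding \<kappa>_def using Kpos by (simp add: field_simps)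
      qed
      have pb: "Ssum {k. nr k \<le> L} (per L x') \<le> beta * card {k::int^'d. nr k \<le> L}"
        using periodic_bound[of L x'] unfolding Ssum_def .
      have pz: "Ssum {k. nr k \<le> L} (per L x') \<ge> Ssum {k. nr k \<le> L} x' - card {b::int^'d. nr b = L} * SS"
        by (rule periodize)
      have key: "\<kappa> * (card Q * c) \<le> card {b::int^'d. nr b = L} * SS"
        using fI xs mg cg pb pz sumind unfolding f_def by (simp add: algebra_simps)
      have cQ: "real (card Q) = (2 * real m + 1) ^ CARD('d)" unfolding Q_def by (rule real_card_box)
      have "\<kappa> * c * (2 * real m + 1) ^ CARD('d) \<le> SS * (2 * CARD('d) * (2 * real (m + n) + 1) ^ (CARD('d) - 1))"
      proof -
        have "\<kappa> * c * (2 * real m + 1) ^ CARD('d) \<le> card {b::int^'d. nr b = L} * SS"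
          using key cQ by (simp add: algebra_simps)
        also have "\<dots> \<le> (2 * CARD('d) * (2 * real L + 1) ^ (CARD('d) - 1)) * SS"
          by (rule mult_right_mono[OF real_card_shell SS_nonneg])
        finally show ?thesis unfolding L_def by (simp add: algebra_simps)
      qed
      then have "\<kappa> * c * (2 * real m + 1) \<le> SS * CARD('d) * 2 ^ CARD('d)"
        by (rule arith_final[OF _ mn card_pos SS_nonneg])
      then show False using mbig by linarith
    qed
  qed
qed

end

theorem proposition4p2:
  fixes \<phi> :: "(int^'d::finite \<Rightarrow> 'a::{finite,discrete_topology}) \<Rightarrow> real"
  assumes cont: "continuous_on UNIV \<phi>"
    and summ: "summable (\<lambda>n. real n ^ (CARD('d) - 1) * var n \<phi>)"
    and nonconst: "\<exists>\<mu> \<in> inv_measures. \<exists>\<nu> \<in> inv_measures. integral\<^sup>L \<mu> \<phi> \<noteq> integral\<^sup>L \<nu> \<phi>"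
  shows "\<exists>\<Lambda> w. finite \<Lambda> \<and> (\<forall>\<eta> \<in> MM \<phi>. emeasure \<eta> (cylinder \<Lambda> w) = 0)"
proof -
  interpret phis \<phi> using cont summ by unfold_locales
  show ?thesis by (rule main[OF nonconst])
qed

end
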